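(* Let $V$ be a real vector space and $C$ a cone in $V$. Suppose $X$ is a decomposably $C$-antichain-convex subset of $V$. (1) If $X$ is $C$-upward, then $X$ is convex. (2) If $X$ is $C$-downward, then $X$ is convex.
   Context: A cone in $V$ is a subset $C$ with $\lambda C\subseteq C$ for all $\lambda>0$ (possibly empty, need not contain $0$). $S\subseteq V$ is $C$-antichain-convex iff for all $x,y\in S$ and $\lambda\in[0,1]$ with $y-x\notin C\cup(-C)$ one has $\lambda x+(1-\lambda)y\in S$. $S$ is decomposably $C$-antichain-convex iff $S=S_1+\dots+S_n$ (Minkowski sum) for finitely many $C$-antichain-convex $S_i\subseteq V$. $S$ is $C$-upward iff $S+C\subseteq S$ (i.e., $x\in S$, $y-x\in C$ imply $y\in S$); $S$ is $C$-downward iff $S-C\subseteq S$. *)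

theory Defs
  imports "HOL-Analysis.Analysis"
begin

definition is_cone :: "'a::real_vector set \<Rightarrow> bool" where
  "is_cone C \<longleftrightarrow> (\<forall>t::real. \<forall>x\<in>C. t > 0 \<longrightarrow> t *\<^sub>R x \<in> C)"

definition antichain_convex :: "'a::real_vector set \<Rightarrow> 'a set \<Rightarrow> bool" where
  "antichain_convex C S \<longleftrightarrow>
     (\<forall>x\<in>S. \<forall>y\<in>S. \<forall>t::real. 0 \<le> t \<and> t \<le> 1 \<and> y - x \<notin> C \<union> uminus ` C
        \<longrightarrow> t *\<^sub>R x + (1 - t) *\<^sub>R y \<in> S)"

fun minkowski_sum :: "'a::real_vector set list \<Rightarrow> 'a set" where
  "minkowski_sum [] = {0}"
| "minkowski_sum (A # As) = {a + b | a b. a \<in> A \<and> b \<in> minkowski_sum As}"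

definition decomp_antichain_convex :: "'a::real_vector set \<Rightarrow> 'a set \<Rightarrow> bool" where
  "decomp_antichain_convex C S \<longleftrightarrow>
     (\<exists>Ss. Ss \<noteq> [] \<and> (\<forall>Si\<in>set Ss. antichain_convex C Si) \<and> S = minkowski_sum Ss)"

definition upward :: "'a::real_vector set \<Rightarrow> 'a set \<Rightarrow> bool" where
  "upward C S \<longleftrightarrow> (\<forall>x\<in>S. \<forall>c\<in>C. x + c \<in> S)"

definition downward :: "'a::real_vector set \<Rightarrow> 'a set \<Rightarrow> bool" where
  "downward C S \<longleftrightarrow> (\<forall>x\<in>S. \<forall>c\<in>C. x - c \<in> S)"

end

theory Submission
  imports Defs
begin

lemma one_step:
  assumes "is_cone C" "antichain_convex C A" "a \<in> A" "b \<in> A" "0 \<le> t" "t \<le> 1"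
  shows "\<exists>q\<in>A. \<exists>d\<in>insert 0 C. t *\<^sub>R a + (1 - t) *\<^sub>R b = q + d"
proof (cases "b - a \<in> C")
  case True
  have e: "t *\<^sub>R a + (1 - t) *\<^sub>R b = a + (1 - t) *\<^sub>R (b - a)"
    by (simp add: algebra_simps)
  have "(1 - t) *\<^sub>R (b - a) \<in> insert 0 C"
  proof (cases "t = 1")
    case False
    then show ?thesis using True assms(1,6) unfolding is_cone_def by auto
  qed simp
  then show ?thesis using e assms(3) by blast
next
  case F1: False
  show ?thesis
  proof (cases "b - a \<in> uminus ` C")
    case True
    then have ac: "a - b \<in> C" by (metis add.inverse_inverse image_iff minus_diff_eq)
    have e: "t *\<^sub>R a + (1 - t) *\<^sub>R b = b + t *\<^sub>R (a - b)"
      by (simp add: algebra_simps)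
    have "t *\<^sub>R (a - b) \<in> insert 0 C"
    proof (cases "t = 0")
      case False
      then show ?thesis using ac assms(1,5) unfolding is_cone_def by auto
    qed simp
    then show ?thesis using e assms(4) by blast
  next
    case False
    then have "t *\<^sub>R a + (1 - t) *\<^sub>R b \<in> A"
      using F1 assms unfolding antichain_convex_def by blast
    then show ?thesis by force
  qed
qed

lemma list_step:
  assumes "is_cone C" "\<forall>Si\<in>set Ss. antichain_convex C Si"
    "x \<in> minkowski_sum Ss" "y \<in> minkowski_sum Ss" "0 \<le> t" "t \<le> 1"
  shows "\<exists>p\<in>minkowski_sum Ss. \<exists>ds. set ds \<subseteq> insert 0 C \<and>
           t *\<^sub>R x + (1 - t) *\<^sub>R y = p + sum_list ds"
  using assms(2-4)
proof (induction Ss arbitrary: x y)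
  case Nil
  then show ?case by (intro bexI[of _ 0] exI[of _ "[]"]) auto
next
  case (Cons A As)
  from Cons.prems obtain a b where ab: "a \<in> A" "b \<in> minkowski_sum As" "x = a + b" by auto
  from Cons.prems obtain a' b' where ab': "a' \<in> A" "b' \<in> minkowski_sum As" "y = a' + b'" by auto
  from Cons.IH[OF _ ab(2) ab'(2)] Cons.prems obtain p ds where
    p: "p \<in> minkowski_sum As" "set ds \<subseteq> insert 0 C" "t *\<^sub>R b + (1 - t) *\<^sub>R b' = p + sum_list ds"
    by auto
  have acA: "antichain_convex C A" using Cons.prems by simp
  obtain q d where
    q: "q \<in> A" "d \<in> insert 0 C" "t *\<^sub>R a + (1 - t) *\<^sub>R a' = q + d"
    using one_step[OF assms(1) acA ab(1) ab'(1) assms(5,6)] by blast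
  have "t *\<^sub>R x + (1 - t) *\<^sub>R y = (q + p) + sum_list (d # ds)"
  proof -
    have "t *\<^sub>R x + (1 - t) *\<^sub>R y = (t *\<^sub>R a + (1 - t) *\<^sub>R a') + (t *\<^sub>R b + (1 - t) *\<^sub>R b')"
      using ab(3) ab'(3) by (simp add: algebra_simps)
    also have "\<dots> = (q + d) + (p + sum_list ds)" using p(3) q(3) by simp
    finally show ?thesis by (simp add: algebra_simps)
  qed
  moreover have "q + p \<in> minkowski_sum (A # As)" using p(1) q(1) by auto
  moreover have "set (d # ds) \<subseteq> insert 0 C" using p(2) q(2) by auto
  ultimately show ?case by blast
qed

lemma upward_list:
  assumes "upward C X" "p \<in> X" "set ds \<subseteq> insert 0 C"
  shows "p + sum_list ds \<in> X"
  using assms(2,3)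
proof (induction ds arbitrary: p)
  case Nil then show ?case by simp
next
  case (Cons d ds)
  have "p + d \<in> X" using Cons.prems assms(1) unfolding upward_def by auto
  then have "p + d + sum_list ds \<in> X" using Cons by auto
  then show ?case by (simp add: add.assoc)
qed

lemma part1:
  assumes "is_cone C" "decomp_antichain_convex C X" "upward C X"
  shows "convex X"
proof -
  obtain Ss where S: "\<forall>Si\<in>set Ss. antichain_convex C Si" "X = minkowski_sum Ss"
    using assms(2) unfolding decomp_antichain_convex_def by auto
  show ?thesis unfolding convex_def
  proof (intro ballI allI impI)
    fix x y and u v :: real
    assume xy: "x \<in> X" "y \<in> X" and uv0: "0 \<le> u" "0 \<le> v" and uv1: "u + v = 1"
    then have uv: "0 \<le> u \<and> 0 \<le> v \<and> u + v = 1" by auto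
    then have v: "v = 1 - u" "u \<le> 1" by auto
    from list_step[OF assms(1) S(1), of x y u] xy uv v S(2) obtain p ds where
      "p \<in> X" "set ds \<subseteq> insert 0 C" "u *\<^sub>R x + (1 - u) *\<^sub>R y = p + sum_list ds" by auto
    then show "u *\<^sub>R x + v *\<^sub>R y \<in> X" using upward_list[OF assms(3)] v by metis
  qed
qed

theorem theorem2:
  fixes C X :: "'a::real_vector set"
  assumes "is_cone C"
    and "decomp_antichain_convex C X"
  shows "(upward C X \<longrightarrow> convex X) \<and> (downward C X \<longrightarrow> convex X)"
proof (intro conjI impI)
  assume "upward C X" then show "convex X" using part1 assms by blast
next
  assume d: "downward C X"
  let ?D = "uminus ` C"
  have c: "is_cone ?D" using assms(1) unfolding is_cone_def
    by (auto simp: image_iff)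
  have sym: "?D \<union> uminus ` ?D = C \<union> uminus ` C" by (auto simp: image_image)
  have ac: "antichain_convex ?D S = antichain_convex C S" for S
    unfolding antichain_convex_def sym ..
  have "decomp_antichain_convex ?D X" using assms(2) unfolding decomp_antichain_convex_def ac .
  moreover have "upward ?D X" using d unfolding upward_def downward_def by auto
  ultimately show "convex X" using part1 c by blast
qed

end
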